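(* Fix a master index $m\in\{1,\dots,N\}$, write $\omega=\omega_m$, $\phi=\phi_m$, $\alpha=m$, $\beta=m+N$, and assume $4\omega^2\neq\omega_r^2$ for all $r\in\{1,\dots,N\}$. Define $$\Psi^{(P)}=\big[4\omega^2\mathbf{M}-\mathbf{K}\big]^{-1}\mathbf{G}(\phi,\phi),\qquad \Psi^{(N)}=-\mathbf{K}^{-1}\mathbf{G}(\phi,\phi),$$ $\Psi^{(2)}_{\alpha\alpha}=\Psi^{(2)}_{\beta\beta}=\Psi^{(P)}$, $\Psi^{(2)}_{\alpha\beta}=\Psi^{(2)}_{\beta\alpha}=\Psi^{(N)}$, and for $k,l,p\in\{\alpha,\beta\}$ $$\Xi_{klp}=\mathbf{G}(\Psi^{(2)}_{kl},\phi)+\mathbf{G}(\phi,\Psi^{(2)}_{lp})+\mathbf{H}(\phi,\phi,\phi),\qquad f_{\alpha klp}=-\frac{\phi^{T}\Xi_{klp}}{2i\omega},\qquad f_{\beta klp}=-f_{\alpha klp}.$$ Let $z_\alpha(t),z_\beta(t)$ be differentiable (complex-valued) functions satisfying the reduced dynamics $$\dot z_\alpha=i\omega z_\alpha+\sum_{k,l,p\in\{\alpha,\beta\}}f_{\alpha klp}z_kz_lz_p,\qquad \dot z_\beta=-i\omega z_\beta+\sum_{k,l,p\in\{\alpha,\beta\}}f_{\beta klp}z_kz_lz_p,$$ and set $r=z_\alpha+z_\beta$, $s=i\omega(z_\alpha-z_\beta)$. Then $\dot r=s$ and $$\dot s=-\omega^2r-(h+A)\,r^3-B\,r\,s^2,$$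 so that $\ddot r+\omega^2 r+(h+A)r^3+B\,r\,\dot r^2=0$, where $$h=\phi^{T}\mathbf{H}(\phi,\phi,\phi),\quad A=2\,\phi^{T}\mathbf{G}(\hat{\mathbf a},\phi),\quad B=2\,\phi^{T}\mathbf{G}(\hat{\mathbf b},\phi),\quad \hat{\mathbf a}=\tfrac12\big(\Psi^{(N)}+\Psi^{(P)}\big),\quad \hat{\mathbf b}=\frac{1}{2\omega^2}\big(\Psi^{(N)}-\Psi^{(P)}\big).$$
   Context: Let $N\ge1$, let $\mathbf{M},\mathbf{K}\in\mathbb{R}^{N\times N}$ be symmetric positive definite, let $\mathbf{G}:\mathbb{R}^N\times\mathbb{R}^N\to\mathbb{R}^N$ be a symmetric bilinear map and $\mathbf{H}:(\mathbb{R}^N)^3\to\mathbb{R}^N$ a symmetric trilinear map, both extended complex-multilinearly to $\mathbb{C}^N$. Let $\phi_1,\dots,\phi_N\in\mathbb{R}^N$ and $\omega_1,\dots,\omega_N>0$ satisfy $\mathbf{K}\phi_s=\omega_s^2\mathbf{M}\phi_s$ and $\phi_s^{T}\mathbf{M}\phi_t=\delta_{st}$ (mass-normalised linear vibration modes). *)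

theory Defs
  imports "HOL-Analysis.Analysis"
begin

definition sym_pos_def :: "real^'n^'n \<Rightarrow> bool" where
  "sym_pos_def A \<longleftrightarrow> transpose A = A \<and> (\<forall>x. x \<noteq> 0 \<longrightarrow> x \<bullet> (A *v x) > 0)"

definition sym_bilinear :: "('a::real_vector \<Rightarrow> 'a \<Rightarrow> 'b::real_vector) \<Rightarrow> bool" where
  "sym_bilinear G \<longleftrightarrow> bilinear G \<and> (\<forall>x y. G x y = G y x)"

definition sym_trilinear :: "('a::real_vector \<Rightarrow> 'a \<Rightarrow> 'a \<Rightarrow> 'b::real_vector) \<Rightarrow> bool" where
  "sym_trilinear H \<longleftrightarrow>
     (\<forall>y z. linear (\<lambda>x. H x y z)) \<and> (\<forall>x z. linear (\<lambda>y. H x y z)) \<and>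
     (\<forall>x y. linear (\<lambda>z. H x y z)) \<and>
     (\<forall>x y z. H x y z = H y x z \<and> H x y z = H x z y)"

text \<open>The two indices alpha = m and beta = m + N of the reduced (complex) coordinates.\<close>
datatype idx = Al | Be

definition Psi_P :: "real^'n^'n \<Rightarrow> real^'n^'n \<Rightarrow> (real^'n \<Rightarrow> real^'n \<Rightarrow> real^'n)
                     \<Rightarrow> real \<Rightarrow> real^'n \<Rightarrow> real^'n" where
  "Psi_P M K G w ph = matrix_inv ((4 * w\<^sup>2) *\<^sub>R M - K) *v G ph ph"

definition Psi_N :: "real^'n^'n \<Rightarrow> (real^'n \<Rightarrow> real^'n \<Rightarrow> real^'n)
                     \<Rightarrow> real^'n \<Rightarrow> real^'n" where
  "Psi_N K G ph = - (matrix_inv K *v G ph ph)"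

definition Psi2 :: "real^'n^'n \<Rightarrow> real^'n^'n \<Rightarrow> (real^'n \<Rightarrow> real^'n \<Rightarrow> real^'n)
                     \<Rightarrow> real \<Rightarrow> real^'n \<Rightarrow> idx \<Rightarrow> idx \<Rightarrow> real^'n" where
  "Psi2 M K G w ph k l = (if k = l then Psi_P M K G w ph else Psi_N K G ph)"

definition Xi :: "real^'n^'n \<Rightarrow> real^'n^'n \<Rightarrow> (real^'n \<Rightarrow> real^'n \<Rightarrow> real^'n)
                  \<Rightarrow> (real^'n \<Rightarrow> real^'n \<Rightarrow> real^'n \<Rightarrow> real^'n)
                  \<Rightarrow> real \<Rightarrow> real^'n \<Rightarrow> idx \<Rightarrow> idx \<Rightarrow> idx \<Rightarrow> real^'n" where
  "Xi M K G H w ph k l p =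
     G (Psi2 M K G w ph k l) ph + G ph (Psi2 M K G w ph l p) + H ph ph ph"

definition fcoef :: "real^'n^'n \<Rightarrow> real^'n^'n \<Rightarrow> (real^'n \<Rightarrow> real^'n \<Rightarrow> real^'n)
                  \<Rightarrow> (real^'n \<Rightarrow> real^'n \<Rightarrow> real^'n \<Rightarrow> real^'n)
                  \<Rightarrow> real \<Rightarrow> real^'n \<Rightarrow> idx \<Rightarrow> idx \<Rightarrow> idx \<Rightarrow> idx \<Rightarrow> complex" where
  "fcoef M K G H w ph j k l p =
     (let fa = - complex_of_real (ph \<bullet> Xi M K G H w ph k l p) / (2 * \<i> * complex_of_real w)
      in if j = Al then fa else - fa)"

end

theory Submission
  imports Defs
begin

lemma alg:
  fixes a b :: complex and P N h w :: real
  assumes w: "w \<noteq> 0"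
  defines "cc \<equiv> (\<lambda>k l p. (if k = l then P else N) + (if l = p then P else N) + h)"
  defines "zz \<equiv> (\<lambda>k. if k = Al then a else b)"
  shows "\<i> * complex_of_real w *
     ((\<i> * complex_of_real w * a + (\<Sum>k\<in>{Al,Be}. \<Sum>l\<in>{Al,Be}. \<Sum>p\<in>{Al,Be}.
         (- complex_of_real (cc k l p) / (2 * \<i> * complex_of_real w)) * zz k * zz l * zz p))
    - (- \<i> * complex_of_real w * b + (\<Sum>k\<in>{Al,Be}. \<Sum>l\<in>{Al,Be}. \<Sum>p\<in>{Al,Be}.
         (- (- complex_of_real (cc k l p) / (2 * \<i> * complex_of_real w))) * zz k * zz l * zz p)))
   = - complex_of_real (w\<^sup>2) * (a+b) - complex_of_real (h + (N + P)) * (a+b)^3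
     - complex_of_real ((N - P)/ w\<^sup>2) * (a+b) * (\<i> * complex_of_real w * (a - b))\<^sup>2"
  using w unfolding cc_def zz_def
  by (simp add: field_simps power2_eq_square power3_eq_cube)


theorem mainTheorem6:
  fixes M K :: "real^'n^'n"
    and G :: "real^'n \<Rightarrow> real^'n \<Rightarrow> real^'n"
    and H :: "real^'n \<Rightarrow> real^'n \<Rightarrow> real^'n \<Rightarrow> real^'n"
    and phi :: "'n \<Rightarrow> real^'n" and omega :: "'n \<Rightarrow> real"
    and m :: 'n
    and I :: "real set"
    and z :: "idx \<Rightarrow> real \<Rightarrow> complex"
  assumes M: "sym_pos_def M" and K: "sym_pos_def K"
    and G: "sym_bilinear G" and H: "sym_trilinear H"
    and eig: "\<forall>s. K *v phi s = (omega s)\<^sup>2 *\<^sub>R (M *v phi s)"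
    and orth: "\<forall>s t. phi s \<bullet> (M *v phi t) = (if s = t then 1 else 0)"
    and pos: "\<forall>s. omega s > 0"
    and nonres: "\<forall>r. 4 * (omega m)\<^sup>2 \<noteq> (omega r)\<^sup>2"
    and I: "open I"
    and dyn_a: "\<forall>t\<in>I. (z Al has_vector_derivative
        (\<i> * complex_of_real (omega m) * z Al t
         + (\<Sum>k\<in>{Al,Be}. \<Sum>l\<in>{Al,Be}. \<Sum>p\<in>{Al,Be}.
              fcoef M K G H (omega m) (phi m) Al k l p * z k t * z l t * z p t))) (at t)"
    and dyn_b: "\<forall>t\<in>I. (z Be has_vector_derivative
        (- \<i> * complex_of_real (omega m) * z Be t
         + (\<Sum>k\<in>{Al,Be}. \<Sum>l\<in>{Al,Be}. \<Sum>p\<in>{Al,Be}.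
              fcoef M K G H (omega m) (phi m) Be k l p * z k t * z l t * z p t))) (at t)"
  defines "w \<equiv> omega m" and "ph \<equiv> phi m"
  defines "r \<equiv> (\<lambda>t. z Al t + z Be t)"
    and "s \<equiv> (\<lambda>t. \<i> * complex_of_real w * (z Al t - z Be t))"
    and "h \<equiv> ph \<bullet> H ph ph ph"
    and "ahat \<equiv> (1/2) *\<^sub>R (Psi_N K G ph + Psi_P M K G w ph)"
    and "bhat \<equiv> (1 / (2 * w\<^sup>2)) *\<^sub>R (Psi_N K G ph - Psi_P M K G w ph)"
  defines "A \<equiv> 2 * (ph \<bullet> G ahat ph)" and "B \<equiv> 2 * (ph \<bullet> G bhat ph)"
  shows "\<forall>t\<in>I. (r has_vector_derivative s t) (at t)
           \<and> (s has_vector_derivative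
                (- complex_of_real (w\<^sup>2) * r t - complex_of_real (h + A) * (r t)^3
                 - complex_of_real B * r t * (s t)\<^sup>2)) (at t)"
  proof
  fix t assume t: "t \<in> I"
  have w0: "w \<noteq> 0" using pos unfolding w_def by (metis less_irrefl)
  have Gb: "bilinear G" and Gs: "\<And>x y. G x y = G y x" using G unfolding sym_bilinear_def by auto
  define P where "P = ph \<bullet> G (Psi_P M K G w ph) ph"
  define N where "N = ph \<bullet> G (Psi_N K G ph) ph"
  define cc where "cc = (\<lambda>(k::idx) (l::idx) (p::idx). (if k = l then P else N) + (if l = p then P else N) + h)"
  define zz where "zz = (\<lambda>k::idx. if k = Al then z Al t else z Be t)"
  have zz: "\<And>k. z k t = zz k" unfolding zz_def by (metis idx.exhaust)
  have xi: "ph \<bullet> Xi M K G H w ph k l p = cc k l p" for k l p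
    unfolding Xi_def cc_def P_def N_def h_def Psi2_def
    by (auto simp: inner_add_right Gs[of ph])
  have fa: "fcoef M K G H w ph Al k l p = - complex_of_real (cc k l p) / (2 * \<i> * complex_of_real w)" for k l p
    unfolding fcoef_def Let_def xi by simp
  have fb: "fcoef M K G H w ph Be k l p = - (- complex_of_real (cc k l p) / (2 * \<i> * complex_of_real w))" for k l p
    unfolding fcoef_def Let_def xi by simp
  have AA: "A = N + P" unfolding A_def ahat_def N_def P_def
    by (simp add: bilinear_lmul[OF Gb] bilinear_ladd[OF Gb] inner_add_right)
  have BB: "B = (N - P) / w\<^sup>2" unfolding B_def bhat_def N_def P_def
    using w0 by (simp add: bilinear_lmul[OF Gb] bilinear_lsub[OF Gb] inner_diff_right field_simps)
  define Fa where "Fa = (\<Sum>k\<in>{Al,Be}. \<Sum>l\<in>{Al,Be}. \<Sum>p\<in>{Al,Be}.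
              fcoef M K G H (omega m) (phi m) Al k l p * z k t * z l t * z p t)"
  define Fb where "Fb = (\<Sum>k\<in>{Al,Be}. \<Sum>l\<in>{Al,Be}. \<Sum>p\<in>{Al,Be}.
              fcoef M K G H (omega m) (phi m) Be k l p * z k t * z l t * z p t)"
  have da: "(z Al has_vector_derivative (\<i> * complex_of_real w * z Al t + Fa)) (at t)"
    using dyn_a t unfolding Fa_def w_def by auto
  have db: "(z Be has_vector_derivative (- \<i> * complex_of_real w * z Be t + Fb)) (at t)"
    using dyn_b t unfolding Fb_def w_def by auto
  have FF: "Fa + Fb = 0" unfolding Fa_def Fb_def fcoef_def Let_def by simp
  have dr: "(r has_vector_derivative (\<i> * complex_of_real w * z Al t + Fa + (- \<i> * complex_of_real w * z Be t + Fb))) (at t)"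
    unfolding r_def using has_vector_derivative_add[OF da db] by (simp add: add.assoc)
  have "\<i> * complex_of_real w * z Al t + Fa + (- \<i> * complex_of_real w * z Be t + Fb) = s t"
    using FF unfolding s_def by (simp add: algebra_simps)
  with dr have R: "(r has_vector_derivative s t) (at t)" by simp
  have ds: "(s has_vector_derivative (\<i> * complex_of_real w * ((\<i> * complex_of_real w * z Al t + Fa) - (- \<i> * complex_of_real w * z Be t + Fb)))) (at t)"
    unfolding s_def by (intro has_vector_derivative_mult_right has_vector_derivative_diff da db)
  have "\<i> * complex_of_real w * ((\<i> * complex_of_real w * z Al t + Fa) - (- \<i> * complex_of_real w * z Be t + Fb))
     = - complex_of_real (w\<^sup>2) * r t - complex_of_real (h + A) * (r t)^3
                 - complex_of_real B * r t * (s t)\<^sup>2"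
    unfolding Fa_def Fb_def AA BB r_def s_def zz fa fb w_def[symmetric] ph_def[symmetric]
    using alg[OF w0, where P=P and N=N and h=h and a="z Al t" and b="z Be t"] unfolding cc_def zz_def by simp
  with ds R show "(r has_vector_derivative s t) (at t) \<and> (s has_vector_derivative
                (- complex_of_real (w\<^sup>2) * r t - complex_of_real (h + A) * (r t)^3
                 - complex_of_real B * r t * (s t)\<^sup>2)) (at t)" by simp
qed

end
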